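(* Let $1\le m_1\le m$ be integers and let a set of $n$ jobs with processing times $p_1,\dots,p_n>0$ be given, all available at time $0$, to be processed non-preemptively on identical machines that always work at full rate. Then the minimum total completion time of the jobs on $m_1$ identical machines is at most $\left\lceil\frac{m}{m_1}\right\rceil$ times the minimum total completion time of the jobs on $m$ identical machines.
   Context: Each job is processed by exactly one machine without interruption, each machine processes one job at a time, and the total completion time is $\sum_j C_j$ where $C_j$ is the completion time of job $j$. *)

theory Defs
  imports Complex_Main
begin

definition feasible_schedule ::
  "nat \<Rightarrow> nat \<Rightarrow> (nat \<Rightarrow> real) \<Rightarrow> (nat \<Rightarrow> nat) \<Rightarrow> (nat \<Rightarrow> real) \<Rightarrow> bool" where
  "feasible_schedule k n p mach S \<longleftrightarrow>
     (\<forall>j<n. mach j < k \<and> 0 \<le> S j) \<and>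
     (\<forall>i<n. \<forall>j<n. i \<noteq> j \<and> mach i = mach j \<longrightarrow> S i + p i \<le> S j \<or> S j + p j \<le> S i)"

definition total_completion_time :: "nat \<Rightarrow> (nat \<Rightarrow> real) \<Rightarrow> (nat \<Rightarrow> real) \<Rightarrow> real" where
  "total_completion_time n p S = (\<Sum>j<n. S j + p j)"

definition opt_tct :: "nat \<Rightarrow> nat \<Rightarrow> (nat \<Rightarrow> real) \<Rightarrow> real" where
  "opt_tct k n p = Inf {total_completion_time n p S | mach S. feasible_schedule k n p mach S}"

end

theory Submission
  imports Defs
begin

lemma pack:
  assumes fs: "feasible_schedule M n p mach S" and pp: "\<forall>j<n. p j > 0"
  shows "finite A \<Longrightarrow> A \<subseteq> {i. i<n \<and> mach i = q} \<Longrightarrow> (\<forall>i\<in>A. S i + p i \<le> T) \<Longrightarrow> 0 \<le> T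
     \<Longrightarrow> sum p A \<le> T"
proof (induction "card A" arbitrary: A T rule: less_induct)
  case less
  show ?case
  proof (cases "A = {}")
    case True then show ?thesis using less by simp
  next
    case False
    let ?C = "\<lambda>i. S i + p i"
    have "Max (?C ` A) \<in> ?C ` A" using False less.prems(1) by (intro Max_in) auto
    then obtain j where jA: "j \<in> A" and jm: "?C j = Max (?C ` A)" by auto
    have jmax: "\<forall>i\<in>A. ?C i \<le> ?C j" using jm less.prems(1) by auto
    have jn: "j < n" "mach j = q" using jA less.prems(2) by auto
    have Sj: "0 \<le> S j" using fs jn unfolding feasible_schedule_def by auto
    have others: "\<forall>i\<in>A - {j}. ?C i \<le> S j"
    proof
      fix i assume i: "i \<in> A - {j}"
      hence "i < n" "mach i = q" "i \<noteq> j" using less.prems(2) by auto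
      hence "?C i \<le> S j \<or> ?C j \<le> S i" using fs jn unfolding feasible_schedule_def by metis
      moreover have "p i > 0" using pp \<open>i<n\<close> by auto
      moreover have "?C i \<le> ?C j" using jmax i by auto
      ultimately show "?C i \<le> S j" by auto
    qed
    have "sum p (A - {j}) \<le> S j"
      apply (rule less.hyps[OF card_Diff1_less[OF less.prems(1) jA]])
      using less.prems jA others Sj by auto
    moreover have "sum p A = sum p (A - {j}) + p j"
      using jA less.prems(1) by (simp add: sum.remove)
    ultimately show ?thesis using jmax jA less.prems(3) by auto
  qed
qed

lemma transform:
  assumes fs: "feasible_schedule m n p mach S" and pp: "\<forall>j<n. p j > 0"
    and k1: "1 \<le> k" and mk: "m \<le> k * m1"
  shows "\<exists>mach' S'. feasible_schedule m1 n p mach' S' \<and>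
           total_completion_time n p S' \<le> real k * total_completion_time n p S"
proof -
  let ?C = "\<lambda>i. S i + p i"
  define mach' where "mach' = (\<lambda>j. mach j div k)"
  define rel where "rel = (\<lambda>i j. ?C i < ?C j \<or> (?C i = ?C j \<and> i < j))"
  define S' where "S' = (\<lambda>j. sum p {i. i<n \<and> mach' i = mach' j \<and> rel i j})"
  have pnn: "\<And>A. A \<subseteq> {..<n} \<Longrightarrow> \<forall>i\<in>A. 0 \<le> p i" using pp by force
  have fin: "\<And>P. finite {i. i<n \<and> P i}" by auto
  have S'nn: "\<And>j. 0 \<le> S' j" unfolding S'_def using pp by (intro sum_nonneg) auto
  have step: "S' i + p i \<le> S' j" if "i<n" "j<n" "mach' i = mach' j" "rel i j" for i j
  proof -
    have "S' i + p i = sum p ({l. l<n \<and> mach' l = mach' i \<and> rel l i} \<union> {i})"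
      unfolding S'_def by (subst sum.union_disjoint) (auto simp: rel_def)
    also have "\<dots> \<le> S' j" unfolding S'_def
      apply (rule sum_mono2)
      using that pp by (auto simp: rel_def)
    finally show ?thesis .
  qed
  have feas: "feasible_schedule m1 n p mach' S'"
    unfolding feasible_schedule_def
  proof (intro conjI allI impI)
    fix j assume "j < n"
    hence "mach j < m" using fs unfolding feasible_schedule_def by auto
    hence "mach j < m1 * k" using mk by (simp add: mult.commute)
    thus "mach' j < m1" unfolding mach'_def using k1 by (simp add: div_less_iff_less_mult)
    show "0 \<le> S' j" by (rule S'nn)
  next
    fix i j assume "i < n" "j < n" "i \<noteq> j \<and> mach' i = mach' j"
    moreover have "rel i j \<or> rel j i" using \<open>i \<noteq> j \<and> mach' i = mach' j\<close> unfolding rel_def by auto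
    ultimately show "S' i + p i \<le> S' j \<or> S' j + p j \<le> S' i" using step by metis
  qed
  have bound: "S' j + p j \<le> real k * ?C j" if jn: "j < n" for j
  proof -
    let ?g = "mach' j"
    let ?A = "{l. l<n \<and> mach' l = ?g \<and> ?C l \<le> ?C j}"
    have Cj: "0 \<le> ?C j" using fs jn pp unfolding feasible_schedule_def by (smt (verit))
    have "S' j + p j = sum p ({l. l<n \<and> mach' l = ?g \<and> rel l j} \<union> {j})"
      unfolding S'_def by (subst sum.union_disjoint) (auto simp: rel_def)
    also have "\<dots> \<le> sum p ?A"
      apply (rule sum_mono2)
      using jn pp by (auto simp: rel_def)
    also have "\<dots> = (\<Sum>q\<in>{?g*k..<?g*k+k}. sum p {x. x \<in> ?A \<and> mach x = q})"
    proof (rule sum.group[symmetric])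
      show "finite ?A" by auto
      show "finite {?g*k..<?g*k+k}" by auto
      show "mach ` ?A \<subseteq> {?g*k..<?g*k+k}"
      proof
        fix x assume "x \<in> mach ` ?A"
        then obtain l where "x = mach l" "mach l div k = mach j div k" unfolding mach'_def by auto
        thus "x \<in> {?g*k..<?g*k+k}" unfolding mach'_def
          by (metis atLeastLessThan_iff div_times_less_eq_dividend less_mult_imp_div_less
              add.commute dividend_less_times_div k1 less_le_trans zero_less_one mult.commute)
      qed
    qed
    also have "\<dots> \<le> (\<Sum>q\<in>{?g*k..<?g*k+k}. ?C j)"
    proof (rule sum_mono)
      fix q
      show "sum p {x. x \<in> ?A \<and> mach x = q} \<le> ?C j"
        by (rule pack[OF fs pp, of _ q]) (use Cj in auto)
    qed
    also have "\<dots> = real k * ?C j" by simp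
    finally show ?thesis .
  qed
  have "total_completion_time n p S' \<le> (\<Sum>j<n. real k * ?C j)"
    unfolding total_completion_time_def by (rule sum_mono) (use bound in auto)
  also have "\<dots> = real k * total_completion_time n p S"
    unfolding total_completion_time_def by (simp add: sum_distrib_left)
  finally show ?thesis using feas by blast
qed

lemma seq_feasible:
  assumes "1 \<le> m" "\<forall>j<n. p j > 0"
  shows "feasible_schedule m n p (\<lambda>_. 0) (\<lambda>j. sum p {..<j})"
  unfolding feasible_schedule_def
proof (intro conjI allI impI)
  fix j assume "j < n"
  show "(0::nat) < m" using assms by auto
  show "0 \<le> sum p {..<j}" using assms \<open>j<n\<close> by (intro sum_nonneg) (auto intro: less_imp_le)
next
  fix i j assume ij: "i < n" "j < n" "i \<noteq> j \<and> (0::nat) = 0"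
  have mono: "sum p {..<a} + p a \<le> sum p {..<b}" if "a < b" "b < n" for a b
  proof -
    have "sum p {..<a} + p a = sum p {..<Suc a}" by simp
    also have "\<dots> \<le> sum p {..<b}"
    proof (rule sum_mono2)
      show "\<And>x. x \<in> {..<b} - {..<Suc a} \<Longrightarrow> 0 \<le> p x"
        using that assms by (metis DiffD1 lessThan_iff less_imp_le less_trans)
    qed (use that in auto)
    finally show ?thesis .
  qed
  show "sum p {..<i} + p i \<le> sum p {..<j} \<or> sum p {..<j} + p j \<le> sum p {..<i}"
  proof (cases "i < j")
    case True thus ?thesis using mono ij by auto
  next
    case False hence "j < i" using ij by auto
    thus ?thesis using mono ij by auto
  qed
qed

theorem claim2:
  fixes m m1 n :: nat and p :: "nat \<Rightarrow> real"
  assumes "1 \<le> m1" and "m1 \<le> m" and "\<forall>j<n. p j > 0"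
  shows "opt_tct m1 n p \<le> real_of_int \<lceil>real m / real m1\<rceil> * opt_tct m n p"
proof -
  define c where "c = \<lceil>real m / real m1\<rceil>"
  have m1pos: "real m1 > 0" using assms by auto
  have "1 \<le> real m / real m1" using assms m1pos by (simp add: field_simps)
  hence c1: "1 \<le> c" unfolding c_def by linarith
  define k where "k = nat c"
  have kc: "real k = real_of_int c" unfolding k_def using c1 by simp
  have k1: "1 \<le> k" unfolding k_def using c1 by simp
  have "real m / real m1 \<le> real k" using kc unfolding c_def by simp
  hence "real m \<le> real k * real m1" using m1pos by (simp add: field_simps)
  hence mk: "m \<le> k * m1" by (metis of_nat_le_iff of_nat_mult)
  let ?X1 = "{total_completion_time n p S | mach S. feasible_schedule m1 n p mach S}"
  let ?Xm = "{total_completion_time n p S | mach S. feasible_schedule m n p mach S}"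
  have bdd: "bdd_below ?X1"
  proof (rule bdd_belowI)
    fix x assume "x \<in> ?X1"
    then obtain mach S where "x = total_completion_time n p S" "feasible_schedule m1 n p mach S" by auto
    thus "0 \<le> x" unfolding total_completion_time_def feasible_schedule_def
      using assms(3) by (auto intro!: sum_nonneg simp: add_nonneg_nonneg less_imp_le)
  qed
  have ne: "?Xm \<noteq> {}" using seq_feasible[of m n p] assms by auto
  have kpos: "real k > 0" using k1 by simp
  have "opt_tct m1 n p / real k \<le> opt_tct m n p"
    unfolding opt_tct_def
  proof (rule cInf_greatest[OF ne])
    fix x assume "x \<in> ?Xm"
    then obtain mach S where x: "x = total_completion_time n p S" and fs: "feasible_schedule m n p mach S" by auto
    obtain mach' S' where f': "feasible_schedule m1 n p mach' S'"
      and b: "total_completion_time n p S' \<le> real k * total_completion_time n p S"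
      using transform[OF fs assms(3) k1 mk] by blast
    have "Inf ?X1 \<le> total_completion_time n p S'"
      by (rule cInf_lower[OF _ bdd]) (use f' in blast)
    hence "Inf ?X1 \<le> real k * x" using b unfolding x by (rule order_trans)
    thus "Inf ?X1 / real k \<le> x" using kpos by (simp add: field_simps mult.commute)
  qed
  hence "opt_tct m1 n p \<le> real k * opt_tct m n p" using kpos by (simp add: field_simps)
  thus ?thesis using kc unfolding c_def by simp
qed

end
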